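(* Let $u,w$ be words over $\{L,R\}$. If $w$ starts with $L$ and $Lu$ is derivable from $w$, then $LLu$ is derivable from $Lw$. Dually, if $w$ starts with $R$ and $Ru$ is derivable from $w$, then $RRu$ is derivable from $Rw$.
   Context: Words are finite strings (including the empty word) over $\{L,R\}$. A word $u$ is derivable from $w$ if it is obtained from $w$ by finitely many successive applications (in any order) of the following rules, where $v,v'$ denote arbitrary words: (1) $vRRv'\Rightarrow vRv'$; (1') $vLLv'\Rightarrow vLv'$; (2) $vLRv'\Rightarrow vv'$; (2') $vRLv'\Rightarrow vv'$; (3) $vv'\Rightarrow v'$ (tail formation). *)

theory Defs
  imports Main
begin

datatype letter = L | R

type_synonym word = "letter list"

inductive step :: "word \<Rightarrow> word \<Rightarrow> bool" where
  rule1:  "step (v @ [R, R] @ v') (v @ [R] @ v')"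
| rule1': "step (v @ [L, L] @ v') (v @ [L] @ v')"
| rule2:  "step (v @ [L, R] @ v') (v @ v')"
| rule2': "step (v @ [R, L] @ v') (v @ v')"
| rule3:  "step (v @ v') v'"

definition derivable :: "word \<Rightarrow> word \<Rightarrow> bool" where
  "derivable u w \<longleftrightarrow> step\<^sup>*\<^sup>* w u"

end

theory Submission
  imports Defs
begin

definition loc :: "word \<Rightarrow> word \<Rightarrow> bool" where
  "loc y z \<longleftrightarrow> (\<exists>a b pat rep. (pat, rep) \<in> {([R,R],[R]),([L,L],[L]),([L,R],[]),([R,L],[])}
      \<and> y = a @ pat @ b \<and> z = a @ rep @ b)"

lemma loc_step: "loc x y \<Longrightarrow> step x y"
  unfolding loc_def using step.rule1 step.rule1' step.rule2[of _ "[]"] step.rule2'[of _ "[]"] step.rule2 step.rule2'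
  by auto

lemma step_loc_or_tail: "step y z \<Longrightarrow> loc y z \<or> (\<exists>v. y = v @ z)"
  by (induction rule: step.induct) (unfold loc_def, blast+)

lemma loc_prefix: "loc x y \<Longrightarrow> loc (c @ x) (c @ y)"
  unfolding loc_def
  by (elim exE conjE, rule_tac x="c @ a" in exI, rule_tac x=b in exI, auto)

lemma locs_prefix: "loc\<^sup>*\<^sup>* x y \<Longrightarrow> loc\<^sup>*\<^sup>* (c @ x) (c @ y)"
  by (induction rule: rtranclp_induct) (auto intro: rtranclp.rtrancl_into_rtrancl loc_prefix)

lemma locs_steps: "loc\<^sup>*\<^sup>* x y \<Longrightarrow> step\<^sup>*\<^sup>* x y"
  by (induction rule: rtranclp_induct) (auto intro: rtranclp.rtrancl_into_rtrancl loc_step)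

lemma single:
  assumes "loc y z" "z = v @ v'"
  shows "\<exists>q y'. y = q @ y' \<and> loc\<^sup>=\<^sup>= y' v'"
proof -
  obtain a b pat rep where pr: "(pat, rep) \<in> {([R,R],[R]),([L,L],[L]),([L,R],[]),([R,L],[])}"
    and y: "y = a @ pat @ b" and z: "z = a @ rep @ b"
    using assms(1) unfolding loc_def by blast
  have lr: "length rep \<le> 1" using pr by auto
  have lp: "length pat = length rep + 1 \<or> length pat = length rep + 2" using pr by auto
  have v': "v' = drop (length v) z" using assms(2) by simp
  show ?thesis
  proof (cases "length v \<le> length a")
    case True
    define a2 where "a2 = drop (length v) a"
    have a: "a = take (length v) a @ a2" unfolding a2_def by simp
    have "v' = a2 @ rep @ b" using v' z True unfolding a2_def by simp
    hence "loc (a2 @ pat @ b) v'" unfolding loc_def using pr by blast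
    moreover have "y = take (length v) a @ (a2 @ pat @ b)" using y a by (metis append.assoc)
    ultimately show ?thesis by blast
  next
    case False
    hence le: "length v \<ge> length a + length rep" using lr by (cases rep) auto
    define k where "k = length v - length a - length rep"
    have "v' = drop k b" using v' z le unfolding k_def by simp
    moreover have "y = (a @ pat @ take k b) @ drop k b" using y by simp
    ultimately show ?thesis by blast
  qed
qed

lemma tailT: "loc\<^sup>*\<^sup>* s y \<Longrightarrow> y = v @ v' \<Longrightarrow> \<exists>p s'. s = p @ s' \<and> loc\<^sup>*\<^sup>* s' v'"
proof (induction arbitrary: v v' rule: rtranclp_induct)
  case base
  then show ?case by blast
next
  case (step y z)
  from single[OF step(2) step(4)] obtain q y' where qy: "y = q @ y'" and ly: "loc\<^sup>=\<^sup>= y' v'"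
    by blast
  from step(3)[OF qy] obtain p s' where ps: "s = p @ s'" and ls: "loc\<^sup>*\<^sup>* s' y'"
    by blast
  have "loc\<^sup>*\<^sup>* s' v'"
  proof (cases "y' = v'")
    case True thus ?thesis using ls by simp
  next
    case False
    hence "loc y' v'" using ly by simp
    thus ?thesis using ls by (rule rtranclp.rtrancl_into_rtrancl[rotated])
  qed
  thus ?case using ps by blast
qed

lemma normal: "step\<^sup>*\<^sup>* w z \<Longrightarrow> \<exists>p s. w = p @ s \<and> loc\<^sup>*\<^sup>* s z"
proof (induction rule: rtranclp_induct)
  case base
  then show ?case by (metis append_Nil rtranclp.rtrancl_refl)
next
  case (step y z)
  then obtain p s where ps: "w = p @ s" "loc\<^sup>*\<^sup>* s y" by blast
  from step_loc_or_tail[OF step(2)] show ?case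
  proof
    assume "loc y z" thus ?thesis using ps(2) ps(1) rtranclp.rtrancl_into_rtrancl[OF ps(2)] by blast
  next
    assume "\<exists>v. y = v @ z"
    then obtain v where "y = v @ z" by blast
    from tailT[OF ps(2) this] obtain p' s' where "s = p' @ s'" "loc\<^sup>*\<^sup>* s' z" by blast
    thus ?thesis using ps by (rule_tac x="p @ p'" in exI) auto
  qed
qed

lemma loc_suffix: "loc x y \<Longrightarrow> loc (x @ c) (y @ c)"
  unfolding loc_def
  by (elim exE conjE, rule_tac x="a" in exI, rule_tac x="b @ c" in exI, auto)

lemma locs_suffix: "loc\<^sup>*\<^sup>* x y \<Longrightarrow> loc\<^sup>*\<^sup>* (x @ c) (y @ c)"
  by (induction rule: rtranclp_induct) (auto intro: rtranclp.rtrancl_into_rtrancl loc_suffix)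

lemma loc1: "loc (a @ [x, x] @ b) (a @ [x] @ b)"
  unfolding loc_def by (cases x) blast+

lemma loc2: "x \<noteq> y \<Longrightarrow> loc (a @ [x, y] @ b) (a @ b)"
  unfolding loc_def apply (cases x; cases y) apply simp_all
   apply (rule exI[of _ a], rule exI[of _ b], rule exI[of _ "[L,R]"], simp)
  apply (rule exI[of _ a], rule exI[of _ b], rule exI[of _ "[R,L]"], simp)
  done

lemma red: "\<exists>t. length t \<le> 1 \<and> loc\<^sup>*\<^sup>* p t"
proof (induction p)
  case Nil
  show ?case by (rule exI[of _ "[]"]) auto
next
  case (Cons x p)
  then obtain t where t: "length t \<le> 1" "loc\<^sup>*\<^sup>* p t" by blast
  have 1: "loc\<^sup>*\<^sup>* (x # p) (x # t)" using locs_prefix[OF t(2), of "[x]"] by simp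
  show ?case
  proof (cases t)
    case Nil
    then show ?thesis using 1 by (rule_tac x="[x]" in exI) auto
  next
    case (Cons y t')
    hence t': "t' = []" using t(1) by simp
    show ?thesis
    proof (cases "x = y")
      case True
      have "loc ([] @ [x, x] @ []) ([] @ [x] @ [])" by (rule loc1)
      thus ?thesis using 1 Cons t' True by (rule_tac x="[x]" in exI) auto
    next
      case False
      have "loc ([] @ [x, y] @ []) ([] @ [])" using False by (rule loc2)
      thus ?thesis using 1 Cons t' by (rule_tac x="[]" in exI) auto
    qed
  qed
qed

lemma gen:
  assumes "w \<noteq> []" "hd w = c" "derivable (c # u) w"
  shows "derivable (c # c # u) (c # w)"
proof -
  obtain w' where w: "w = c # w'" using assms(1,2) by (cases w) auto
  obtain p s where ps: "w = p @ s" "loc\<^sup>*\<^sup>* s (c # u)"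
    using normal assms(3) unfolding derivable_def by blast
  have ls: "loc\<^sup>*\<^sup>* (c # s) (c # c # u)" using locs_prefix[OF ps(2), of "[c]"] by simp
  show ?thesis
  proof (cases p)
    case Nil
    thus ?thesis using ls ps locs_steps unfolding derivable_def by simp
  next
    case (Cons x p')
    hence cw: "c # w = [c, c] @ p' @ s" using w ps by simp
    obtain t where t: "length t \<le> 1" "loc\<^sup>*\<^sup>* p' t" using red by blast
    have a: "loc\<^sup>*\<^sup>* (c # w) ([c, c] @ t @ s)"
      using cw locs_prefix[OF locs_suffix[OF t(2), of s], of "[c,c]"] by simp
    have b: "loc\<^sup>*\<^sup>* ([c, c] @ t @ s) (c # s)"
    proof (cases t)
      case Nil
      have "loc ([] @ [c, c] @ s) ([] @ [c] @ s)" by (rule loc1)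
      thus ?thesis using Nil by auto
    next
      case (Cons y t')
      hence t': "t' = []" using t(1) by simp
      show ?thesis
      proof (cases "y = c")
        case True
        have "loc ([] @ [c, c] @ (c # s)) ([] @ [c] @ (c # s))" by (rule loc1)
        moreover have "loc ([] @ [c, c] @ s) ([] @ [c] @ s)" by (rule loc1)
        ultimately show ?thesis using Cons t' True
          by (metis append_Cons append_Nil r_into_rtranclp rtranclp.rtrancl_into_rtrancl)
      next
        case False
        have "loc ([c] @ [c, y] @ s) ([c] @ s)" using False[symmetric] by (rule loc2)
        thus ?thesis using Cons t' by auto
      qed
    qed
    show ?thesis using locs_steps[OF rtranclp_trans[OF rtranclp_trans[OF a b] ls]]
      unfolding derivable_def .
  qed
qed

theorem mainTheorem8:
  fixes u w :: word
  shows "(hd w = L \<and> w \<noteq> [] \<and> derivable (L # u) w \<longrightarrow> derivable (L # L # u) (L # w))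
       \<and> (hd w = R \<and> w \<noteq> [] \<and> derivable (R # u) w \<longrightarrow> derivable (R # R # u) (R # w))"
  using gen by blast

end
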